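(* Let $q:\mathbb{R}\to[0,\infty)$ be an even probability density, let $r:\mathbb{R}\to\mathbb{R}$ be measurable, and let $A=\sum_i a_i|i\rangle\langle i|$ be a Hermitian operator on a finite-dimensional Hilbert space $\mathcal{H}$ such that $\int|r(p)|\,q(a_i-p)\,dp<\infty$ for every eigenvalue $a_i$; set $s(a)\coloneqq(q*r)(a)=\int_{\mathbb{R}}q(a-p)r(p)\,dp$. Let $\rho$ be a density operator on $\mathcal{H}$, let $|q\rangle\coloneqq\int_{\mathbb{R}}dp\,\sqrt{q(p)}\,|p\rangle$, let $W\coloneqq e^{i\hat{x}\otimes A}=\sum_i\int dx\,e^{ixa_i}|x\rangle\langle x|\otimes|i\rangle\langle i|$, and define $$P(p)\coloneqq\operatorname{Tr}\!\left[(|p\rangle\langle p|\otimes I)\,W(|q\rangle\langle q|\otimes\rho)W^{\dagger}\right]\quad(p\in\mathbb{R}),$$ the probability density of the outcome of a momentum measurement on the control mode. Then $P$ is a probability density and $$\int_{\mathbb{R}}r(p)\,P(p)\,dp=\operatorname{Tr}[s(A)\rho].$$ That is, preparing $|q\rangle\langle q|\otimes\rho$, applying $e^{i\hat{x}\otimes A}$, measuring the control mode in the momentum basis with outcome $p$ and outputting $r(p)$ yields a random variable with expected value $\operatorname{Tr}[s(A)\rho]$.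
   Context: The control register is a single bosonic mode (qumode) with Hilbert space $L^2(\mathbb{R})$; $\{|x\rangle\}_{x\in\mathbb{R}}$ and $\{|p\rangle\}_{p\in\mathbb{R}}$ are the generalized position and momentum eigenbases, with $\langle x|p\rangle=e^{ipx}/\sqrt{2\pi}$, $\langle p|p'\rangle=\delta(p-p')$, and $\hat{x}=\int x|x\rangle\langle x|\,dx$ is the position quadrature operator. $s(A)$ is defined by the functional calculus. *)

theory Defs
  imports "HOL-Analysis.Analysis"
begin

text \<open>Finite-dimensional Hilbert space H = complex^'n, operators = complex^'n^'n.\<close>

definition cinner :: "complex^'n \<Rightarrow> complex^'n \<Rightarrow> complex" where
  "cinner v w = (\<Sum>k\<in>UNIV. cnj (v$k) * w$k)"

definition adj :: "complex^'n^'n \<Rightarrow> complex^'n^'n" where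
  "adj M = (\<chi> i j. cnj (M$j$i))"

definition outer :: "complex^'n \<Rightarrow> complex^'n \<Rightarrow> complex^'n^'n" where
  "outer v w = (\<chi> i j. v$i * cnj (w$j))"

definition cscale :: "complex \<Rightarrow> complex^'n^'n \<Rightarrow> complex^'n^'n" where
  "cscale c M = (\<chi> i j. c * M$i$j)"

definition orthonormal_basis :: "('n::finite \<Rightarrow> complex^'n) \<Rightarrow> bool" where
  "orthonormal_basis u \<longleftrightarrow> (\<forall>i j. cinner (u i) (u j) = (if i = j then 1 else 0))"

definition hermitian :: "complex^'n^'n \<Rightarrow> bool" where
  "hermitian M \<longleftrightarrow> adj M = M"

definition density_op :: "complex^'n^'n \<Rightarrow> bool" where
  "density_op \<rho> \<longleftrightarrow> hermitian \<rho> \<and> (\<forall>v. cinner v (\<rho> *v v) \<in> \<real> \<and> 0 \<le> Re (cinner v (\<rho> *v v)))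
      \<and> trace \<rho> = 1"

text \<open>Functional calculus for A = \<Sum>i a_i |u_i><u_i| (u orthonormal eigenbasis, a real eigenvalues):
  f(A) = \<Sum>i f(a_i) |u_i><u_i|.\<close>
definition fun_calc :: "(real \<Rightarrow> real) \<Rightarrow> ('n::finite \<Rightarrow> complex^'n) \<Rightarrow> ('n \<Rightarrow> real) \<Rightarrow> complex^'n^'n" where
  "fun_calc f u a = (\<Sum>i\<in>UNIV. cscale (complex_of_real (f (a i))) (outer (u i) (u i)))"

text \<open>Qumode in momentum representation.  An operator \<Omega> on L^2(R) \<otimes> H is described by its
  momentum kernel K p p' = <p|\<Omega>|p'> (an operator on H).
  Kernel of |\<phi>><\<phi>| \<otimes> \<rho>, where \<phi> is the momentum wavefunction <p|\<phi>>:\<close>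
definition prod_kernel :: "(real \<Rightarrow> complex) \<Rightarrow> complex^'n^'n \<Rightarrow> real \<Rightarrow> real \<Rightarrow> complex^'n^'n" where
  "prod_kernel \<phi> \<rho> = (\<lambda>p p'. cscale (\<phi> p * cnj (\<phi> p')) \<rho>)"

text \<open>Momentum wavefunction of |q> = \<integral> dp sqrt(q p) |p>\<close>
definition qket :: "(real \<Rightarrow> real) \<Rightarrow> real \<Rightarrow> complex" where
  "qket q p = complex_of_real (sqrt (q p))"

text \<open>Since <x|p> = e^{ipx}/sqrt(2\<pi>), e^{i a x} |p> = |p + a>, i.e. <p|e^{i a x}|\<psi>> = <p - a|\<psi>>.
  Hence W = e^{i x \<otimes> A} = \<Sum>i e^{i a_i x} \<otimes> |u_i><u_i| acts on momentum kernels by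
  <p|W \<Omega> W^\<dagger>|p'> = \<Sum>i j |u_i><u_i| <p - a_i|\<Omega>|p' - a_j> |u_j><u_j|.\<close>
definition conj_W :: "('n::finite \<Rightarrow> complex^'n) \<Rightarrow> ('n \<Rightarrow> real)
      \<Rightarrow> (real \<Rightarrow> real \<Rightarrow> complex^'n^'n) \<Rightarrow> real \<Rightarrow> real \<Rightarrow> complex^'n^'n" where
  "conj_W u a K = (\<lambda>p p'. \<Sum>i\<in>UNIV. \<Sum>j\<in>UNIV.
       outer (u i) (u i) ** K (p - a i) (p' - a j) ** outer (u j) (u j))"

text \<open>Tr[(|p><p| \<otimes> I) \<Omega>] = tr_H <p|\<Omega>|p>\<close>
definition mom_prob :: "(real \<Rightarrow> real \<Rightarrow> complex^'n^'n) \<Rightarrow> real \<Rightarrow> complex" where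
  "mom_prob K p = trace (K p p)"

end

theory Submission
  imports Defs
begin

lemma sum_mult_delta:
  fixes f :: "'n::finite \<Rightarrow> complex"
  shows "(\<Sum>j\<in>UNIV. f j * (if i = j then 1 else 0)) = f i"
proof -
  have "(\<Sum>j\<in>UNIV. f j * (if i = j then 1 else 0)) = (\<Sum>j\<in>UNIV. if i = j then f j else 0)"
    by (rule sum.cong) auto
  then show ?thesis by simp
qed

lemma trace_UXV:
  fixes u v :: "complex^'n" and X :: "complex^'n^'n"
  shows "trace (outer u u ** X ** outer v v) = (\<Sum>l\<in>UNIV. \<Sum>m\<in>UNIV. cnj (u$l) * X$l$m * v$m) * cinner v u"
proof -
  define F where "F k l m = cnj (u$l) * X$l$m * v$m * (cnj (v$k) * u$k)" for k l m
  have "trace (outer u u ** X ** outer v v) = (\<Sum>k\<in>UNIV. \<Sum>m\<in>UNIV. \<Sum>l\<in>UNIV. F k l m)"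
    unfolding trace_def matrix_matrix_mult_def outer_def F_def
    by (simp add: sum_distrib_left sum_distrib_right mult.commute mult.left_commute)
  also have "\<dots> = (\<Sum>k\<in>UNIV. \<Sum>l\<in>UNIV. \<Sum>m\<in>UNIV. F k l m)"
    by (rule sum.cong[OF refl], rule sum.swap)
  also have "\<dots> = (\<Sum>l\<in>UNIV. \<Sum>k\<in>UNIV. \<Sum>m\<in>UNIV. F k l m)"
    by (rule sum.swap)
  also have "\<dots> = (\<Sum>l\<in>UNIV. \<Sum>m\<in>UNIV. \<Sum>k\<in>UNIV. F k l m)"
    by (rule sum.cong[OF refl], rule sum.swap)
  also have "\<dots> = (\<Sum>l\<in>UNIV. \<Sum>m\<in>UNIV. cnj (u$l) * X$l$m * v$m * cinner v u)"
    unfolding F_def cinner_def by (simp only: sum_distrib_left)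
  also have "\<dots> = (\<Sum>l\<in>UNIV. \<Sum>m\<in>UNIV. cnj (u$l) * X$l$m * v$m) * cinner v u"
    by (simp only: sum_distrib_right)
  finally show ?thesis .
qed

lemma cinner_mv: "cinner u (X *v u) = (\<Sum>l\<in>UNIV. \<Sum>m\<in>UNIV. cnj (u$l) * X$l$m * u$m)"
  unfolding cinner_def matrix_vector_mult_def by (simp add: sum_distrib_left mult.assoc)

lemma trace_UX:
  fixes u :: "complex^'n" and X :: "complex^'n^'n"
  shows "trace (outer u u ** X) = cinner u (X *v u)"
proof -
  have "trace (outer u u ** X) = (\<Sum>k\<in>UNIV. \<Sum>l\<in>UNIV. cnj (u$l) * X$l$k * u$k)"
    unfolding trace_def matrix_matrix_mult_def outer_def
    by (simp add: mult.commute mult.left_commute)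
  also have "\<dots> = (\<Sum>l\<in>UNIV. \<Sum>k\<in>UNIV. cnj (u$l) * X$l$k * u$k)"
    by (rule sum.swap)
  finally show ?thesis by (simp add: cinner_mv)
qed

lemma trace_sum: "trace (sum f S) = (\<Sum>i\<in>S. trace (f i))"
  unfolding trace_def by (simp add: sum_component sum.swap[of _ S])

lemma trace_sum_mult: "trace (sum f S ** X) = (\<Sum>i\<in>S. trace (f i ** X))"
  unfolding trace_def matrix_matrix_mult_def
  by (simp add: sum_component sum_distrib_right sum.swap[of _ S])

lemma trace_cscale_mult: "trace (cscale c M ** X) = c * trace (M ** X)"
  unfolding trace_def matrix_matrix_mult_def cscale_def
  by (simp add: sum_distrib_left mult.assoc)

lemma onb_complete:
  fixes u :: "'n::finite \<Rightarrow> complex^'n"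
  assumes "orthonormal_basis u"
  shows "(\<Sum>i\<in>UNIV. u i $ k * cnj (u i $ l)) = (if k = l then 1 else 0)"
proof -
  define V :: "complex^'n^'n" where "V = (\<chi> k i. u i $ k)"
  define W :: "complex^'n^'n" where "W = (\<chi> i l. cnj (u i $ l))"
  have "W ** V = mat 1"
    using assms unfolding orthonormal_basis_def cinner_def
    by (simp add: V_def W_def matrix_matrix_mult_def mat_def vec_eq_iff)
  then have "V ** W = mat 1" using matrix_left_right_inverse by blast
  then have "(V ** W) $ k $ l = mat 1 $ k $ l" by simp
  then show ?thesis by (simp add: V_def W_def matrix_matrix_mult_def mat_def)
qed

lemma sum_w_trace:
  fixes u :: "'n::finite \<Rightarrow> complex^'n" and X :: "complex^'n^'n"
  assumes "orthonormal_basis u"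
  shows "(\<Sum>i\<in>UNIV. cinner (u i) (X *v u i)) = trace X"
proof -
  have "(\<Sum>i\<in>UNIV. cinner (u i) (X *v u i))
      = (\<Sum>i\<in>UNIV. \<Sum>l\<in>UNIV. \<Sum>m\<in>UNIV. X$l$m * (u i $ m * cnj (u i $ l)))"
    by (simp add: cinner_mv mult.commute mult.left_commute)
  also have "\<dots> = (\<Sum>l\<in>UNIV. \<Sum>i\<in>UNIV. \<Sum>m\<in>UNIV. X$l$m * (u i $ m * cnj (u i $ l)))"
    by (rule sum.swap)
  also have "\<dots> = (\<Sum>l\<in>UNIV. \<Sum>m\<in>UNIV. \<Sum>i\<in>UNIV. X$l$m * (u i $ m * cnj (u i $ l)))"
    by (rule sum.cong[OF refl], rule sum.swap)
  also have "\<dots> = (\<Sum>l\<in>UNIV. \<Sum>m\<in>UNIV. X$l$m * (if m = l then 1 else 0))"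
    by (simp only: sum_distrib_left[symmetric] onb_complete[OF assms])
  also have "\<dots> = (\<Sum>l\<in>UNIV. \<Sum>m\<in>UNIV. (if m = l then X$l$m else 0))"
    by (rule sum.cong[OF refl], rule sum.cong[OF refl]) simp
  also have "\<dots> = trace X" by (simp add: trace_def)
  finally show ?thesis .
qed


theorem theorem3:
  fixes q r :: "real \<Rightarrow> real"
    and u :: "'n::finite \<Rightarrow> complex^'n" and a :: "'n \<Rightarrow> real"
    and A \<rho> :: "complex^'n^'n"
    and s :: "real \<Rightarrow> real" and P :: "real \<Rightarrow> complex"
  assumes q_nonneg: "\<And>x. 0 \<le> q x"
    and q_even: "\<And>x. q (- x) = q x"
    and q_meas: "q \<in> borel_measurable lborel"
    and q_int: "integrable lborel q"
    and q_norm: "(\<integral>x. q x \<partial>lborel) = 1"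
    and r_meas: "r \<in> borel_measurable lborel"
    and onb: "orthonormal_basis u"
    and A_def: "A = (\<Sum>i\<in>UNIV. cscale (complex_of_real (a i)) (outer (u i) (u i)))"
    and r_int: "\<And>i. integrable lborel (\<lambda>p. \<bar>r p\<bar> * q (a i - p))"
    and s_def: "\<And>x. s x = (\<integral>p. q (x - p) * r p \<partial>lborel)"
    and rho: "density_op \<rho>"
    and P_def: "P = mom_prob (conj_W u a (prod_kernel (qket q) \<rho>))"
  shows "(\<forall>p. P p \<in> \<real> \<and> 0 \<le> Re (P p))
      \<and> integrable lborel (\<lambda>p. Re (P p))
      \<and> (\<integral>p. Re (P p) \<partial>lborel) = 1
      \<and> integrable lborel (\<lambda>p. r p * Re (P p))
      \<and> complex_of_real (\<integral>p. r p * Re (P p) \<partial>lborel) = trace (fun_calc s u a ** \<rho>)"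
proof -
  define w where "w i = cinner (u i) (\<rho> *v u i)" for i
  define W where "W i = Re (w i)" for i
  have wR: "w i = complex_of_real (W i)" for i
    using rho unfolding density_op_def w_def W_def by (metis Reals_cases Re_complex_of_real)
  have W0: "0 \<le> W i" for i
    using rho unfolding density_op_def w_def W_def by blast
  have sumW: "(\<Sum>i\<in>UNIV. W i) = 1"
  proof -
    have "(\<Sum>i\<in>UNIV. w i) = 1" using sum_w_trace[OF onb, of \<rho>] rho
      unfolding w_def density_op_def by simp
    then show ?thesis unfolding wR by (metis of_real_eq_1_iff of_real_sum)
  qed
  have onb': "cinner (u j) (u i) = (if i = j then 1 else 0)" for i j
    using onb unfolding orthonormal_basis_def by (metis)
  have Pform: "P p = complex_of_real (\<Sum>i\<in>UNIV. q (p - a i) * W i)" for p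
  proof -
    have "P p = (\<Sum>i\<in>UNIV. \<Sum>j\<in>UNIV. trace (outer (u i) (u i) ** prod_kernel (qket q) \<rho> (p - a i) (p - a j) ** outer (u j) (u j)))"
      unfolding P_def mom_prob_def conj_W_def by (simp add: trace_sum)
    also have "\<dots> = (\<Sum>i\<in>UNIV. \<Sum>l\<in>UNIV. \<Sum>m\<in>UNIV. cnj (u i$l) * prod_kernel (qket q) \<rho> (p - a i) (p - a i)$l$m * u i$m)"
      by (simp only: trace_UXV onb' sum_mult_delta)
    also have "\<dots> = (\<Sum>i\<in>UNIV. complex_of_real (q (p - a i)) * w i)"
    proof (rule sum.cong[OF refl])
      fix i
      have qq: "qket q x * cnj (qket q x) = complex_of_real (q x)" for x
      proof -
        have "sqrt (q x) * sqrt (q x) = q x" using q_nonneg[of x] by simp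
        then show ?thesis unfolding qket_def complex_cnj_complex_of_real
          by (metis of_real_mult)
      qed
      show "(\<Sum>l\<in>UNIV. \<Sum>m\<in>UNIV. cnj (u i$l) * prod_kernel (qket q) \<rho> (p - a i) (p - a i)$l$m * u i$m)
          = complex_of_real (q (p - a i)) * w i"
        unfolding w_def cinner_mv prod_kernel_def cscale_def qq
        by (simp add: sum_distrib_left mult.commute mult.left_commute)
    qed
    also have "\<dots> = complex_of_real (\<Sum>i\<in>UNIV. q (p - a i) * W i)"
      by (simp add: wR)
    finally show ?thesis .
  qed
  have ReP: "Re (P p) = (\<Sum>i\<in>UNIV. q (p - a i) * W i)" for p
    using Pform by simp
  have q_shift_int: "integrable lborel (\<lambda>p. q (p - a i))" for i
    using lborel_integrable_real_affine[OF q_int, of 1 "- a i"] by simp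
  have q_shift: "(\<integral>p. q (p - a i) \<partial>lborel) = 1" for i
    using lborel_integral_real_affine[of 1 q "- a i"] q_norm by simp
  have qsym: "q (a i - p) = q (p - a i)" for i p
    using q_even[of "p - a i"] by simp
  have [measurable]: "q \<in> borel_measurable borel" "r \<in> borel_measurable borel"
    using q_meas r_meas by auto
  have rq_int: "integrable lborel (\<lambda>p. r p * q (p - a i))" for i
  proof -
    have "integrable lborel (\<lambda>p. \<bar>r p * q (p - a i)\<bar>)"
      using r_int[of i] by (simp add: abs_mult qsym abs_of_nonneg q_nonneg)
    then show ?thesis by (subst (asm) integrable_abs_iff) auto
  qed
  have rq: "(\<integral>p. r p * q (p - a i) \<partial>lborel) = s (a i)" for i
    by (simp add: s_def qsym mult.commute)
  have I1: "integrable lborel (\<lambda>p. Re (P p))"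
    unfolding ReP by (rule Bochner_Integration.integrable_sum[where f="\<lambda>i p. q (p - a i) * W i"]) (simp add: q_shift_int)
  have I2: "(\<integral>p. Re (P p) \<partial>lborel) = 1"
    unfolding ReP using q_shift_int
    by (subst Bochner_Integration.integral_sum) (auto simp: q_shift sumW)
  have rP: "r p * Re (P p) = (\<Sum>i\<in>UNIV. W i * (r p * q (p - a i)))" for p
    unfolding ReP by (simp add: sum_distrib_left mult.commute mult.left_commute)
  have I3: "integrable lborel (\<lambda>p. r p * Re (P p))"
    unfolding rP by (rule Bochner_Integration.integrable_sum[where f="\<lambda>i p. W i * (r p * q (p - a i))"]) (simp add: rq_int)
  have I4: "(\<integral>p. r p * Re (P p) \<partial>lborel) = (\<Sum>i\<in>UNIV. W i * s (a i))"
    unfolding rP using rq_int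
    by (subst Bochner_Integration.integral_sum) (auto simp: rq)
  have T: "trace (fun_calc s u a ** \<rho>) = (\<Sum>i\<in>UNIV. complex_of_real (s (a i)) * w i)"
    unfolding fun_calc_def trace_sum_mult trace_cscale_mult trace_UX w_def ..
  show ?thesis
    using I1 I2 I3 I4 T W0 unfolding Pform
    by (auto simp: wR ReP mult.commute q_nonneg intro!: sum_nonneg mult_nonneg_nonneg)
qed

end
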